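(* Let $A$ be an abelian group. The set $IE(A)$ of all inertial endomorphisms of $A$ is a subring of the endomorphism ring $E(A)$, and it contains the set $F(A)$ of all endomorphisms of $A$ with finite image, which is an ideal of $IE(A)$.
   Context: Abelian groups are written additively. An endomorphism $\varphi$ of an abelian group $A$ is called inertial if for every subgroup $X\le A$ the quotient $(\varphi(X)+X)/X$ is finite. *)

theory Defs
  imports "HOL-Algebra.Ideal" "HOL-Algebra.Subrings"
begin

text \<open>The abelian group A is the type 'a of class ab_group_add (carrier UNIV).\<close>

definition endo :: "('a::ab_group_add \<Rightarrow> 'a) \<Rightarrow> bool" where
  "endo \<phi> \<longleftrightarrow> (\<forall>x y. \<phi> (x + y) = \<phi> x + \<phi> y)"

definition subgrp :: "'a::ab_group_add set \<Rightarrow> bool" where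
  "subgrp U \<longleftrightarrow> 0 \<in> U \<and> (\<forall>x\<in>U. \<forall>y\<in>U. x + y \<in> U) \<and> (\<forall>x\<in>U. uminus x \<in> U)"

text \<open>The quotient (Y + U)/U as the set of cosets y + U, y in Y + U.\<close>
definition quot_set :: "'a::ab_group_add set \<Rightarrow> 'a set \<Rightarrow> 'a set set" where
  "quot_set Y U = (\<lambda>y. (\<lambda>x. y + x) ` U) ` Y"

definition inertial :: "('a::ab_group_add \<Rightarrow> 'a) \<Rightarrow> bool" where
  "inertial \<phi> \<longleftrightarrow> endo \<phi> \<and>
     (\<forall>U. subgrp U \<longrightarrow> finite (quot_set {a + b | a b. a \<in> \<phi> ` U \<and> b \<in> U} U))"

definition End_ring :: "'a::ab_group_add itself \<Rightarrow> ('a \<Rightarrow> 'a) ring" where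
  "End_ring _ = \<lparr>carrier = {\<phi>. endo \<phi>}, mult = (\<lambda>\<phi> \<psi>. \<phi> \<circ> \<psi>), one = id,
                 zero = (\<lambda>x. 0), add = (\<lambda>\<phi> \<psi> x. \<phi> x + \<psi> x)\<rparr>"

definition IE :: "'a::ab_group_add itself \<Rightarrow> ('a \<Rightarrow> 'a) set" where
  "IE _ = {\<phi>. inertial \<phi>}"

definition FE :: "'a::ab_group_add itself \<Rightarrow> ('a \<Rightarrow> 'a) set" where
  "FE _ = {\<phi>. endo \<phi> \<and> finite (range \<phi>)}"

end

theory Submission
  imports Defs
begin

lemma endo_0: "endo f \<Longrightarrow> f 0 = 0"
proof -
  assume "endo f"
  hence "f (0 + 0) = f 0 + f 0" unfolding endo_def by blast
  thus "f 0 = 0" by simp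
qed

lemma endo_neg: "endo f \<Longrightarrow> f (- x) = - f x"
proof -
  assume e: "endo f"
  hence "f (x + - x) = f x + f (- x)" unfolding endo_def by blast
  hence "f x + f (- x) = 0" using endo_0[OF e] by simp
  thus ?thesis by (simp add: add_eq_0_iff)
qed

lemma endo_diff: "endo f \<Longrightarrow> f (x - y) = f x - f y"
proof -
  assume e: "endo f"
  hence "f (x + - y) = f x + f (- y)" unfolding endo_def by blast
  thus ?thesis using endo_neg[OF e, of y] by simp
qed

lemma subgrp_diff: "subgrp U \<Longrightarrow> x \<in> U \<Longrightarrow> y \<in> U \<Longrightarrow> x - y \<in> U"
  unfolding subgrp_def by (simp only: diff_conv_add_uminus)

lemma coset_eq:
  assumes U: "subgrp U" and d: "y - f \<in> U"
  shows "(\<lambda>x. y + x) ` U = (\<lambda>x. f + x) ` U"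
proof
  show "(\<lambda>x. y + x) ` U \<subseteq> (\<lambda>x. f + x) ` U"
  proof
    fix z assume "z \<in> (\<lambda>x. y + x) ` U"
    then obtain u where u: "u \<in> U" "z = y + u" by auto
    have "(y - f) + u \<in> U" using U d u unfolding subgrp_def by blast
    moreover have "z = f + ((y - f) + u)" using u by simp
    ultimately show "z \<in> (\<lambda>x. f + x) ` U" by blast
  qed
next
  show "(\<lambda>x. f + x) ` U \<subseteq> (\<lambda>x. y + x) ` U"
  proof
    fix z assume "z \<in> (\<lambda>x. f + x) ` U"
    then obtain u where u: "u \<in> U" "z = f + u" by auto
    have "u - (y - f) \<in> U" using U d u subgrp_diff by blast
    moreover have "z = y + (u - (y - f))" using u by simp
    ultimately show "z \<in> (\<lambda>x. y + x) ` U" by blast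
  qed
qed

definition bnd :: "('a::ab_group_add \<Rightarrow> 'a) \<Rightarrow> 'a set \<Rightarrow> bool" where
  "bnd \<phi> U \<longleftrightarrow> (\<exists>F. finite F \<and> (\<forall>u\<in>U. \<exists>f\<in>F. \<phi> u - f \<in> U))"

lemma fin_iff_bnd:
  assumes U: "subgrp U"
  shows "finite (quot_set {a + b | a b. a \<in> \<phi> ` U \<and> b \<in> U} U) \<longleftrightarrow> bnd \<phi> U"
proof
  let ?Q = "quot_set {a + b | a b. a \<in> \<phi> ` U \<and> b \<in> U} U"
  assume fin: "finite ?Q"
  define F where "F = (\<lambda>C. SOME y. y \<in> C) ` ?Q"
  have "\<forall>u\<in>U. \<exists>f\<in>F. \<phi> u - f \<in> U"
  proof
    fix u assume u: "u \<in> U"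
    have "0 \<in> U" using U unfolding subgrp_def by blast
    hence "\<phi> u + 0 \<in> {a + b | a b. a \<in> \<phi> ` U \<and> b \<in> U}" using u by blast
    hence C: "(\<lambda>x. \<phi> u + x) ` U \<in> ?Q" unfolding quot_set_def
      by (rule rev_image_eqI) simp
    have "\<phi> u + 0 \<in> (\<lambda>x. \<phi> u + x) ` U" using \<open>0 \<in> U\<close> by blast
    hence "(SOME y. y \<in> (\<lambda>x. \<phi> u + x) ` U) \<in> (\<lambda>x. \<phi> u + x) ` U" by (metis someI)
    then obtain v where v: "v \<in> U" "(SOME y. y \<in> (\<lambda>x. \<phi> u + x) ` U) = \<phi> u + v" by auto
    have "\<phi> u - (\<phi> u + v) = - v" by simp
    moreover have "- v \<in> U" using U v unfolding subgrp_def by blast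
    ultimately have "\<phi> u - (SOME y. y \<in> (\<lambda>x. \<phi> u + x) ` U) \<in> U" using v by simp
    moreover have "(SOME y. y \<in> (\<lambda>x. \<phi> u + x) ` U) \<in> F" unfolding F_def using C by (rule imageI)
    ultimately show "\<exists>f\<in>F. \<phi> u - f \<in> U" by blast
  qed
  moreover have "finite F" using fin unfolding F_def by simp
  ultimately show "bnd \<phi> U" unfolding bnd_def by blast
next
  assume "bnd \<phi> U"
  then obtain F where F: "finite F" "\<forall>u\<in>U. \<exists>f\<in>F. \<phi> u - f \<in> U" unfolding bnd_def by blast
  have "quot_set {a + b | a b. a \<in> \<phi> ` U \<and> b \<in> U} U \<subseteq> (\<lambda>f. (\<lambda>x. f + x) ` U) ` F"
  proof
    fix C assume "C \<in> quot_set {a + b | a b. a \<in> \<phi> ` U \<and> b \<in> U} U"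
    then obtain u w where uw: "u \<in> U" "w \<in> U" "C = (\<lambda>x. (\<phi> u + w) + x) ` U"
      unfolding quot_set_def by auto
    obtain f where f: "f \<in> F" "\<phi> u - f \<in> U" using F uw by blast
    have "(\<phi> u - f) + w \<in> U" using U f uw unfolding subgrp_def by blast
    hence d: "(\<phi> u + w) - f \<in> U" by (simp add: algebra_simps)
    have "C = (\<lambda>x. f + x) ` U" using coset_eq[OF U d] uw(3) by simp
    thus "C \<in> (\<lambda>f. (\<lambda>x. f + x) ` U) ` F" by (rule rev_image_eqI[OF f(1)])
  qed
  thus "finite (quot_set {a + b | a b. a \<in> \<phi> ` U \<and> b \<in> U} U)"
    by (rule finite_subset) (rule finite_imageI[OF F(1)])
qed

lemma inertial_iff: "inertial \<phi> \<longleftrightarrow> endo \<phi> \<and> (\<forall>U. subgrp U \<longrightarrow> bnd \<phi> U)"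
  unfolding inertial_def using fin_iff_bnd by blast

lemma bnd_add:
  assumes U: "subgrp U" and a: "bnd \<phi> U" and b: "bnd \<psi> U"
  shows "bnd (\<lambda>x. \<phi> x + \<psi> x) U"
proof -
  obtain F where F: "finite F" "\<forall>u\<in>U. \<exists>f\<in>F. \<phi> u - f \<in> U" using a unfolding bnd_def by blast
  obtain G where G: "finite G" "\<forall>u\<in>U. \<exists>f\<in>G. \<psi> u - f \<in> U" using b unfolding bnd_def by blast
  have "\<forall>u\<in>U. \<exists>h\<in>(\<lambda>(a,b). a + b) ` (F \<times> G). (\<phi> u + \<psi> u) - h \<in> U"
  proof
    fix u assume u: "u \<in> U"
    obtain f g where fg: "f \<in> F" "\<phi> u - f \<in> U" "g \<in> G" "\<psi> u - g \<in> U" using F G u by blast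
    have "(\<phi> u - f) + (\<psi> u - g) \<in> U" using U fg unfolding subgrp_def by blast
    hence "(\<phi> u + \<psi> u) - (f + g) \<in> U" by (simp add: algebra_simps)
    moreover have "f + g \<in> (\<lambda>(a,b). a + b) ` (F \<times> G)"
      by (rule rev_image_eqI[of "(f, g)"]) (simp_all add: fg)
    ultimately show "\<exists>h\<in>(\<lambda>(a,b). a + b) ` (F \<times> G). (\<phi> u + \<psi> u) - h \<in> U" by (rule bexI)
  qed
  moreover have "finite ((\<lambda>(a,b). a + b) ` (F \<times> G))" using F(1) G(1) by simp
  ultimately show ?thesis unfolding bnd_def by blast
qed

lemma bnd_neg:
  assumes U: "subgrp U" and a: "bnd \<phi> U"
  shows "bnd (\<lambda>x. - \<phi> x) U"
proof -
  obtain F where F: "finite F" "\<forall>u\<in>U. \<exists>f\<in>F. \<phi> u - f \<in> U" using a unfolding bnd_def by blast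
  have "\<forall>u\<in>U. \<exists>h\<in>uminus ` F. (- \<phi> u) - h \<in> U"
  proof
    fix u assume u: "u \<in> U"
    obtain f where f: "f \<in> F" "\<phi> u - f \<in> U" using F u by blast
    have "- (\<phi> u - f) \<in> U" using U f unfolding subgrp_def by blast
    hence "(- \<phi> u) - (- f) \<in> U" by simp
    moreover have "- f \<in> uminus ` F" using f(1) by (rule imageI)
    ultimately show "\<exists>h\<in>uminus ` F. (- \<phi> u) - h \<in> U" by (rule bexI)
  qed
  moreover have "finite (uminus ` F)" using F(1) by simp
  ultimately show ?thesis unfolding bnd_def by blast
qed

lemma bnd_comp:
  assumes U: "subgrp U" and a: "bnd \<phi> U" and b: "bnd \<psi> U" and e: "endo \<phi>"
  shows "bnd (\<phi> \<circ> \<psi>) U"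
proof -
  obtain F where F: "finite F" "\<forall>u\<in>U. \<exists>f\<in>F. \<phi> u - f \<in> U" using a unfolding bnd_def by blast
  obtain G where G: "finite G" "\<forall>u\<in>U. \<exists>f\<in>G. \<psi> u - f \<in> U" using b unfolding bnd_def by blast
  have "\<forall>u\<in>U. \<exists>h\<in>(\<lambda>(a,b). \<phi> a + b) ` (G \<times> F). (\<phi> \<circ> \<psi>) u - h \<in> U"
  proof
    fix u assume u: "u \<in> U"
    obtain g where g: "g \<in> G" "\<psi> u - g \<in> U" using G u by blast
    obtain f where f: "f \<in> F" "\<phi> (\<psi> u - g) - f \<in> U" using F g by blast
    have "(\<phi> \<circ> \<psi>) u - (\<phi> g + f) = (\<phi> (\<psi> u) - \<phi> g) - f"
      by (simp add: algebra_simps)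
    also have "\<dots> = \<phi> (\<psi> u - g) - f" by (simp only: endo_diff[OF e])
    finally have "(\<phi> \<circ> \<psi>) u - (\<phi> g + f) \<in> U" using f(2) by (simp only:)
    moreover have "\<phi> g + f \<in> (\<lambda>(a,b). \<phi> a + b) ` (G \<times> F)"
      by (rule rev_image_eqI[of "(g, f)"]) (simp_all add: f g)
    ultimately show "\<exists>h\<in>(\<lambda>(a,b). \<phi> a + b) ` (G \<times> F). (\<phi> \<circ> \<psi>) u - h \<in> U" by (rule bexI)
  qed
  moreover have "finite ((\<lambda>(a,b). \<phi> a + b) ` (G \<times> F))" using F(1) G(1) by simp
  ultimately show ?thesis unfolding bnd_def by blast
qed

lemma bnd_fin: "subgrp U \<Longrightarrow> finite (range \<phi>) \<Longrightarrow> bnd \<phi> U"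
proof -
  assume U: "subgrp U" and f: "finite (range \<phi>)"
  have "\<forall>u\<in>U. \<exists>f\<in>range \<phi>. \<phi> u - f \<in> U"
  proof
    fix u assume "u \<in> U"
    have "\<phi> u - \<phi> u \<in> U" using U unfolding subgrp_def by simp
    thus "\<exists>f\<in>range \<phi>. \<phi> u - f \<in> U" by (rule bexI[OF _ rangeI])
  qed
  thus ?thesis unfolding bnd_def using f by blast
qed

lemma endo_add: "endo f \<Longrightarrow> endo g \<Longrightarrow> endo (\<lambda>x. f x + g x)"
  unfolding endo_def
proof (intro allI)
  fix x y assume f: "\<forall>x y. f (x + y) = f x + f y" and g: "\<forall>x y. g (x + y) = g x + g y"
  have "f (x + y) + g (x + y) = (f x + f y) + (g x + g y)" using f g by simp
  also have "\<dots> = (f x + g x) + (f y + g y)" by (simp only: add_ac)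
  finally show "f (x + y) + g (x + y) = (f x + g x) + (f y + g y)" .
qed
lemma endo_comp: "endo f \<Longrightarrow> endo g \<Longrightarrow> endo (f \<circ> g)"
  unfolding endo_def comp_def by simp
lemma endo_negf: "endo f \<Longrightarrow> endo (\<lambda>x. - f x)"
  unfolding endo_def
proof (intro allI)
  fix x y assume f: "\<forall>x y. f (x + y) = f x + f y"
  have "- f (x + y) = - (f x + f y)" using f by simp
  also have "\<dots> = - f x + - f y" by (simp only: minus_add_distrib add.commute)
  finally show "- f (x + y) = - f x + - f y" .
qed

lemma ring_End: "ring (End_ring TYPE('a::ab_group_add))"
proof (rule ringI)
  show "abelian_group (End_ring TYPE('a))"
  proof (rule abelian_groupI)
    fix x y assume "x \<in> carrier (End_ring TYPE('a))" "y \<in> carrier (End_ring TYPE('a))"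
    thus "x \<oplus>\<^bsub>End_ring TYPE('a)\<^esub> y \<in> carrier (End_ring TYPE('a))"
      by (simp add: End_ring_def endo_add)
  next
    show "\<zero>\<^bsub>End_ring TYPE('a)\<^esub> \<in> carrier (End_ring TYPE('a))"
      by (simp add: End_ring_def endo_def)
  next
    fix x y z :: "'a \<Rightarrow> 'a"
    show "(x \<oplus>\<^bsub>End_ring TYPE('a)\<^esub> y) \<oplus>\<^bsub>End_ring TYPE('a)\<^esub> z = x \<oplus>\<^bsub>End_ring TYPE('a)\<^esub> (y \<oplus>\<^bsub>End_ring TYPE('a)\<^esub> z)"
      by (simp add: End_ring_def add.assoc)
  next
    fix x y :: "'a \<Rightarrow> 'a"
    show "x \<oplus>\<^bsub>End_ring TYPE('a)\<^esub> y = y \<oplus>\<^bsub>End_ring TYPE('a)\<^esub> x"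
      by (simp add: End_ring_def add.commute)
  next
    fix x :: "'a \<Rightarrow> 'a"
    show "\<zero>\<^bsub>End_ring TYPE('a)\<^esub> \<oplus>\<^bsub>End_ring TYPE('a)\<^esub> x = x"
      by (simp add: End_ring_def)
  next
    fix x assume "x \<in> carrier (End_ring TYPE('a))"
    hence "endo x" by (simp add: End_ring_def)
    hence "(\<lambda>y. - x y) \<in> carrier (End_ring TYPE('a))" "(\<lambda>y. - x y) \<oplus>\<^bsub>End_ring TYPE('a)\<^esub> x = \<zero>\<^bsub>End_ring TYPE('a)\<^esub>"
      by (auto simp: End_ring_def endo_negf)
    thus "\<exists>y\<in>carrier (End_ring TYPE('a)). y \<oplus>\<^bsub>End_ring TYPE('a)\<^esub> x = \<zero>\<^bsub>End_ring TYPE('a)\<^esub>" by blast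
  qed
next
  show "monoid (End_ring TYPE('a))"
  proof (rule monoidI)
    fix x y assume "x \<in> carrier (End_ring TYPE('a))" "y \<in> carrier (End_ring TYPE('a))"
    thus "x \<otimes>\<^bsub>End_ring TYPE('a)\<^esub> y \<in> carrier (End_ring TYPE('a))"
      by (simp add: End_ring_def endo_comp)
  next
    show "\<one>\<^bsub>End_ring TYPE('a)\<^esub> \<in> carrier (End_ring TYPE('a))"
      by (simp add: End_ring_def endo_def)
  qed (simp_all add: End_ring_def comp_assoc)
next
  fix x y z assume "z \<in> carrier (End_ring TYPE('a))"
  hence "endo z" by (simp add: End_ring_def)
  thus "z \<otimes>\<^bsub>End_ring TYPE('a)\<^esub> (x \<oplus>\<^bsub>End_ring TYPE('a)\<^esub> y) = z \<otimes>\<^bsub>End_ring TYPE('a)\<^esub> x \<oplus>\<^bsub>End_ring TYPE('a)\<^esub> z \<otimes>\<^bsub>End_ring TYPE('a)\<^esub> y"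
    by (simp add: End_ring_def endo_def comp_def)
qed (simp add: End_ring_def comp_def)

lemma inv_End:
  assumes "h \<in> carrier (End_ring TYPE('a::ab_group_add))"
  shows "\<ominus>\<^bsub>End_ring TYPE('a)\<^esub> h = (\<lambda>x. - h x)"
proof -
  interpret ring "End_ring TYPE('a)" by (rule ring_End)
  have "endo h" using assms by (simp add: End_ring_def)
  show ?thesis
    by (rule minus_equality) (use assms \<open>endo h\<close> in \<open>auto simp: End_ring_def endo_negf\<close>)
qed

lemma inertial_endo: "inertial f \<Longrightarrow> endo f" by (simp add: inertial_iff)


theorem mainTheorem1:
  shows "subring (IE TYPE('a::ab_group_add)) (End_ring TYPE('a))
       \<and> FE TYPE('a) \<subseteq> IE TYPE('a)
       \<and> ideal (FE TYPE('a)) ((End_ring TYPE('a))\<lparr>carrier := IE TYPE('a)\<rparr>)"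
proof -
  interpret R: ring "End_ring TYPE('a)" by (rule ring_End)
  have IEe: "\<And>h. h \<in> IE TYPE('a) \<Longrightarrow> endo h" by (simp add: IE_def inertial_iff)
  have IEb: "\<And>h U. h \<in> IE TYPE('a) \<Longrightarrow> subgrp U \<Longrightarrow> bnd h U" by (simp add: IE_def inertial_iff)
  have IEI: "\<And>h. endo h \<Longrightarrow> (\<And>U. subgrp U \<Longrightarrow> bnd h U) \<Longrightarrow> h \<in> IE TYPE('a)"
    by (simp add: IE_def inertial_iff)
  have sub: "subring (IE TYPE('a)) (End_ring TYPE('a))"
  proof (rule R.subringI)
    show "IE TYPE('a) \<subseteq> carrier (End_ring TYPE('a))"
      using IEe by (auto simp: End_ring_def)
    have "bnd id U" if "subgrp U" for U :: "'a set"
      unfolding bnd_def using that unfolding subgrp_def by (intro exI[of _ "{0}"]) simp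
    thus "\<one>\<^bsub>End_ring TYPE('a)\<^esub> \<in> IE TYPE('a)"
      unfolding End_ring_def by (simp add: IEI endo_def)
  next
    fix h assume h: "h \<in> IE TYPE('a)"
    hence hc: "h \<in> carrier (End_ring TYPE('a))" using IEe by (simp add: End_ring_def)
    have "(\<lambda>x. - h x) \<in> IE TYPE('a)"
      by (rule IEI) (simp_all add: endo_negf IEe[OF h] bnd_neg IEb[OF h])
    thus "\<ominus>\<^bsub>End_ring TYPE('a)\<^esub> h \<in> IE TYPE('a)" by (simp add: inv_End[OF hc])
  next
    fix h1 h2 assume h: "h1 \<in> IE TYPE('a)" "h2 \<in> IE TYPE('a)"
    have "h1 \<circ> h2 \<in> IE TYPE('a)"
      by (rule IEI) (simp_all add: endo_comp IEe h bnd_comp IEb)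
    thus "h1 \<otimes>\<^bsub>End_ring TYPE('a)\<^esub> h2 \<in> IE TYPE('a)" by (simp add: End_ring_def)
    have "(\<lambda>x. h1 x + h2 x) \<in> IE TYPE('a)"
      by (rule IEI) (simp_all add: endo_add IEe h bnd_add IEb)
    thus "h1 \<oplus>\<^bsub>End_ring TYPE('a)\<^esub> h2 \<in> IE TYPE('a)" by (simp add: End_ring_def)
  qed
  have FI: "FE TYPE('a) \<subseteq> IE TYPE('a)"
  proof
    fix h assume "h \<in> FE TYPE('a)"
    hence "endo h" "finite (range h)" by (simp_all add: FE_def)
    thus "h \<in> IE TYPE('a)" by (intro IEI) (simp_all add: bnd_fin)
  qed
  let ?S = "(End_ring TYPE('a))\<lparr>carrier := IE TYPE('a)\<rparr>"
  have rS: "ring ?S" by (rule R.subring_is_ring[OF sub])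
  interpret S: ring ?S by (rule rS)
  have invS: "\<ominus>\<^bsub>?S\<^esub> h = (\<lambda>x. - h x)" if h: "h \<in> IE TYPE('a)" for h
  proof (rule S.minus_equality)
    show "(\<lambda>x. - h x) \<oplus>\<^bsub>?S\<^esub> h = \<zero>\<^bsub>?S\<^esub>" by (simp add: End_ring_def)
    show "h \<in> carrier ?S" using h by simp
    show "(\<lambda>x. - h x) \<in> carrier ?S"
      by simp (rule IEI, simp_all add: endo_negf IEe[OF h] bnd_neg IEb[OF h])
  qed
  have I: "ideal (FE TYPE('a)) ?S"
  proof (rule idealI[OF rS])
    show "subgroup (FE TYPE('a)) (add_monoid ?S)"
    proof (rule S.add.subgroupI)
      show "FE TYPE('a) \<subseteq> carrier ?S" using FI by simp
      have "(\<lambda>x. 0::'a) \<in> FE TYPE('a)" by (simp add: FE_def endo_def)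
      thus "FE TYPE('a) \<noteq> {}" by blast
    next
      fix a assume a: "a \<in> FE TYPE('a)"
      have "range (\<lambda>x. - a x) = uminus ` range a" by (simp add: image_image)
      hence "finite (range (\<lambda>x. - a x))" using a by (simp add: FE_def)
      moreover have "a \<in> IE TYPE('a)" using a FI by blast
      ultimately show "\<ominus>\<^bsub>?S\<^esub> a \<in> FE TYPE('a)"
        using a by (simp add: invS FE_def endo_negf)
    next
      fix a b assume ab: "a \<in> FE TYPE('a)" "b \<in> FE TYPE('a)"
      have "range (\<lambda>x. a x + b x) \<subseteq> (\<lambda>(p,q). p + q) ` (range a \<times> range b)"
      proof
        fix y assume "y \<in> range (\<lambda>x. a x + b x)"
        then obtain x where "y = a x + b x" by blast
        thus "y \<in> (\<lambda>(p,q). p + q) ` (range a \<times> range b)"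
          by (intro rev_image_eqI[of "(a x, b x)"]) simp_all
      qed
      moreover have "finite ((\<lambda>(p,q). p + q) ` (range a \<times> range b))"
        using ab by (simp add: FE_def)
      ultimately have "finite (range (\<lambda>x. a x + b x))" by (rule finite_subset)
      thus "a \<oplus>\<^bsub>?S\<^esub> b \<in> FE TYPE('a)"
        using ab by (simp add: FE_def End_ring_def endo_add)
    qed
  next
    fix a x assume a: "a \<in> FE TYPE('a)" and x: "x \<in> carrier ?S"
    have ex: "endo x" using x IEe by simp
    have ea: "endo a" "finite (range a)" using a by (simp_all add: FE_def)
    have "range (x \<circ> a) = x ` range a" by (simp add: image_comp)
    hence "finite (range (x \<circ> a))" using ea by simp
    thus "x \<otimes>\<^bsub>?S\<^esub> a \<in> FE TYPE('a)" using ea ex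
      by (simp add: FE_def End_ring_def endo_comp)
    have "range (a \<circ> x) \<subseteq> range a" by auto
    hence "finite (range (a \<circ> x))" using ea finite_subset by blast
    thus "a \<otimes>\<^bsub>?S\<^esub> x \<in> FE TYPE('a)" using ea ex
      by (simp add: FE_def End_ring_def endo_comp)
  qed
  show ?thesis by (rule conjI[OF sub conjI[OF FI I]])
qed

end
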